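(* Let $(X_n)_{n\ge0}$ be the stationary forward Markov process on $\mathbb{T}^n$ with initial density $\theta$ and transition kernel $\gamma$: $X_0$ has density $\theta$, and given $X_k=x$, $X_{k+1}=x+V$ where $V$ has density $v\mapsto\gamma(x,v)$ on $\mathbb{R}^n$. Let $f,g\in\mathcal{L}^2(\theta)$ with $\int f\theta\,dx=\int g\theta\,dx=0$. Then $\mathbb{E}[g(X_0)f(X_n)]\to0$ exponentially fast as $n\to\infty$: there exist $\rho\in(0,1)$ (independent of $f,g$) and $C=C(f,g)$ with $|\mathbb{E}[g(X_0)f(X_n)]|\le C\rho^n$ for all $n$.
   Context: Let $\mathbb{T}^n=\mathbb{R}^n/\mathbb{Z}^n$; $x\pm v$ is taken mod $\mathbb{Z}^n$. Let $L(x,v)=\frac12|v|^2-U(x)+\langle P,v\rangle$ with $U\in C^\infty(\mathbb{T}^n)$, $P\in\mathbb{R}^n$. Fix $\epsilon>0$, $h=1$. Let $\phi,\bar\phi$ (differentiable on $\mathbb{T}^n$) and $\lambda\in\mathbb{R}$ satisfy $-\epsilon\ln\int_{\mathbb{R}^n}e^{-(L(x,v)+\phi(x+v))/\epsilon}dv=\phi(x)+\lambda$ and $-\epsilon\ln\int_{\mathbb{R}^n}e^{-(L(x+v,-v)+\bar\phi(x+v))/\epsilon}dv=\bar\phi(x)+\lambda$, normalized so that $\theta=e^{-(\phi+\bar\phi)/\epsilon}$ is a probability density on $\mathbb{T}^n$. Set $\gamma(x,v)=e^{-(L(x,v)+\phi(x+v)-\phi(x)-\lambda)/\epsilon}$ and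 $Q(x,v)=\theta(x-v)\gamma(x-v,v)/\theta(x)$; it is known (assumed) that $\int\gamma(x,v)dv=\int Q(x,v)dv=1$ for all $x$, that $\theta\gamma$ is holonomic ($\int(\varphi(x+v)-\varphi(x))\theta(x)\gamma(x,v)dxdv=0$ for continuous $\varphi$), and that the positive fixed point of $\mathcal{F}$ is unique up to scaling. $(\mathcal{F}g)(x)=\int\gamma(x,v)g(x+v)dv$ and $(\mathcal{F}^*f)(x)=\int Q(x,v)f(x-v)dv$ (the adjoint of $\mathcal{F}$ in $\mathcal{L}^2(\theta)=L^2(\mathbb{T}^n,\theta\,dx)$). *)

theory Defs
  imports "HOL-Analysis.Analysis"
begin

text \<open>Functions on the torus T^n = R^n/Z^n are represented as Z^n-periodic
  functions on real^'n.\<close>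

definition lattice_periodic :: "(real^'n \<Rightarrow> 'a) \<Rightarrow> bool" where
  "lattice_periodic f \<longleftrightarrow> (\<forall>x (k::int^'n). f (x + (\<chi> i. of_int (k$i))) = f x)"

coinductive smooth_fun :: "(real^'n \<Rightarrow> real) \<Rightarrow> bool" where
  "continuous_on UNIV f \<Longrightarrow>
   (\<forall>i. \<exists>g. (\<forall>x. ((\<lambda>t. f (x + t *\<^sub>R axis i 1)) has_real_derivative g x) (at 0)) \<and> smooth_fun g)
   \<Longrightarrow> smooth_fun f"

text \<open>Integral over the torus = integral over the unit cube (fundamental domain).\<close>
definition torus_int :: "(real^'n \<Rightarrow> real) \<Rightarrow> real" where
  "torus_int h = (LINT x : cbox 0 One | lborel. h x)"

definition Lag :: "(real^'n \<Rightarrow> real) \<Rightarrow> real^'n \<Rightarrow> real^'n \<Rightarrow> real^'n \<Rightarrow> real" where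
  "Lag U P x v = (1/2) * (norm v)^2 - U x + inner P v"

definition theta_of :: "real \<Rightarrow> (real^'n \<Rightarrow> real) \<Rightarrow> (real^'n \<Rightarrow> real) \<Rightarrow> real^'n \<Rightarrow> real" where
  "theta_of eps phi phib x = exp (- (phi x + phib x) / eps)"

definition gamma_of :: "(real^'n \<Rightarrow> real) \<Rightarrow> real^'n \<Rightarrow> real \<Rightarrow> (real^'n \<Rightarrow> real) \<Rightarrow> real
    \<Rightarrow> real^'n \<Rightarrow> real^'n \<Rightarrow> real" where
  "gamma_of U P eps phi lam x v = exp (- (Lag U P x v + phi (x + v) - phi x - lam) / eps)"

definition Q_of :: "(real^'n \<Rightarrow> real) \<Rightarrow> (real^'n \<Rightarrow> real^'n \<Rightarrow> real) \<Rightarrow> real^'n \<Rightarrow> real^'n \<Rightarrow> real" where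
  "Q_of theta gam x v = theta (x - v) * gam (x - v) v / theta x"

primrec Fop :: "(real^'n \<Rightarrow> real^'n \<Rightarrow> real) \<Rightarrow> nat \<Rightarrow> (real^'n \<Rightarrow> real) \<Rightarrow> real^'n \<Rightarrow> real" where
  "Fop gam 0 f = f"
| "Fop gam (Suc m) f = (\<lambda>x. LINT v | lborel. gam x v * Fop gam m f (x + v))"

text \<open>E[g(X_0) f(X_m)] for the Markov chain with initial density theta and kernel gam:
  the integral of g(x_0) f(x_m) against the joint density
  theta(x_0) gam(x_0,v_1) ... gam(x_{m-1},v_m), written as nested iterated integrals.\<close>
definition markov_corr :: "(real^'n \<Rightarrow> real) \<Rightarrow> (real^'n \<Rightarrow> real^'n \<Rightarrow> real)
    \<Rightarrow> (real^'n \<Rightarrow> real) \<Rightarrow> (real^'n \<Rightarrow> real) \<Rightarrow> nat \<Rightarrow> real" where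
  "markov_corr theta gam g f m = torus_int (\<lambda>x. theta x * g x * Fop gam m f x)"

definition in_L2 :: "(real^'n \<Rightarrow> real) \<Rightarrow> (real^'n \<Rightarrow> real) \<Rightarrow> bool" where
  "in_L2 theta f \<longleftrightarrow> f \<in> borel_measurable lborel \<and> lattice_periodic f \<and>
     set_integrable lborel (cbox 0 One) (\<lambda>x. (f x)^2 * theta x)"

definition pos_fixed :: "(real^'n \<Rightarrow> real^'n \<Rightarrow> real) \<Rightarrow> (real^'n \<Rightarrow> real) \<Rightarrow> bool" where
  "pos_fixed gam g \<longleftrightarrow> continuous_on UNIV g \<and> lattice_periodic g \<and> (\<forall>x. g x > 0) \<and>
     (\<forall>x. integrable lborel (\<lambda>v. gam x v * g (x + v)) \<and> (LINT v | lborel. gam x v * g (x + v)) = g x)"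

end

theory Submission
  imports Defs
begin

definition ivec :: "int^'n \<Rightarrow> real^'n" where
  "ivec k = (\<chi> i. of_int (k$i))"

definition Dh :: "(real^'n) set" where
  "Dh = {x. \<forall>i. 0 \<le> x$i \<and> x$i < 1}"

lemma ivec_add: "ivec (a + b) = ivec a + ivec b"
  by (simp add: ivec_def vec_eq_iff)
lemma ivec_uminus: "ivec (- a) = - ivec a"
  by (simp add: ivec_def vec_eq_iff)

lemma Dh_borel[measurable]: "Dh \<in> sets (borel :: (real^'n) measure)"
proof -
  have e: "Dh = (\<Inter>i\<in>UNIV. {x::real^'n. 0 \<le> x$i} \<inter> {x. x$i < 1})" by (auto simp: Dh_def)
  have a: "\<And>i. {x::real^'n. 0 \<le> x$i} \<in> sets borel"
    by (intro borel_closed closed_Collect_le) (auto intro: continuous_intros)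
  have b: "\<And>i. {x::real^'n. x$i < 1} \<in> sets borel"
    by (intro borel_open open_Collect_less) (auto intro: continuous_intros)
  have "(\<Inter>i\<in>UNIV. {x::real^'n. 0 \<le> x$i} \<inter> {x. x$i < 1}) \<in> sets borel"
    by (rule sets.finite_INT) (use a b in auto)
  then show ?thesis by (subst e)
qed

lemma Dh_unique: "\<exists>!k. x - ivec k \<in> Dh"
proof
  show "x - ivec (\<chi> i. floor (x$i)) \<in> Dh"
    by (auto simp: Dh_def ivec_def) linarith
next
  fix k assume "x - ivec k \<in> Dh"
  then have "\<forall>i. of_int (k$i) \<le> x$i \<and> x$i < of_int (k$i) + 1"
    by (auto simp: Dh_def ivec_def algebra_simps)
  then show "k = (\<chi> i. floor (x$i))"
    by (auto simp: vec_eq_iff intro!: floor_unique[symmetric])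
qed

lemma nn_integral_translate:
  fixes G :: "real^'n \<Rightarrow> ennreal"
  assumes [measurable]: "G \<in> borel_measurable borel"
  shows "(\<integral>\<^sup>+v. G (c + v) \<partial>lborel) = (\<integral>\<^sup>+x. G x \<partial>lborel)"
proof -
  have "(\<integral>\<^sup>+x. G x \<partial>lborel) = (\<integral>\<^sup>+x. G x \<partial>distr lborel borel ((+) c))"
    by (simp add: lborel_distr_plus)
  also have "\<dots> = (\<integral>\<^sup>+v. G (c + v) \<partial>lborel)"
    by (subst nn_integral_distr) auto
  finally show ?thesis by simp
qed

lemma nn_integral_reflect:
  fixes G :: "real^'n \<Rightarrow> ennreal"
  assumes [measurable]: "G \<in> borel_measurable borel"
  shows "(\<integral>\<^sup>+v. G (c - v) \<partial>lborel) = (\<integral>\<^sup>+x. G x \<partial>lborel)"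
proof -
  have L: "lborel = density (distr lborel borel (\<lambda>x. c + (-1) *\<^sub>R x)) (\<lambda>_. 1)"
    using lborel_affine[of "-1" c] by simp
  have "(\<integral>\<^sup>+x. G x \<partial>lborel) = (\<integral>\<^sup>+x. G x \<partial>density (distr lborel borel (\<lambda>x. c + (-1) *\<^sub>R x)) (\<lambda>_. 1))"
    by (subst L[symmetric]) simp
  also have "\<dots> = (\<integral>\<^sup>+v. G (c - v) \<partial>lborel)"
    by (subst nn_integral_density) (auto simp: nn_integral_distr)
  finally show ?thesis by simp
qed

lemma tiling:
  fixes G :: "real^'n \<Rightarrow> ennreal"
  assumes [measurable]: "G \<in> borel_measurable borel"
  shows "(\<integral>\<^sup>+x. G x \<partial>lborel) =
    (\<integral>\<^sup>+k. (\<integral>\<^sup>+x. G (x + ivec k) * indicator Dh x \<partial>lborel) \<partial>count_space UNIV)"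
proof -
  interpret P: pair_sigma_finite "count_space (UNIV :: (int^'n) set)" "lborel :: (real^'n) measure"
    unfolding pair_sigma_finite_def by (simp add: sigma_finite_measure_count_space sigma_finite_lborel)
  have pt: "(\<integral>\<^sup>+k. G x * indicator Dh (x - ivec k) \<partial>count_space UNIV) = G x" for x
  proof -
    from Dh_unique[of x] obtain k0 where k0: "x - ivec k0 \<in> Dh" and u: "\<forall>k. x - ivec k \<in> Dh \<longrightarrow> k = k0"
      unfolding Ex1_def by blast
    have "(\<integral>\<^sup>+k. G x * indicator Dh (x - ivec k) \<partial>count_space UNIV)
        = (\<integral>\<^sup>+k. G x * indicator {k0} k \<partial>count_space UNIV)"
      proof (rule nn_integral_cong)
      fix k show "G x * indicator Dh (x - ivec k) = G x * indicator {k0} k"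
      proof (cases "k = k0")
        case True then show ?thesis using k0 by simp
      next
        case False then have "x - ivec k \<notin> Dh" using u by blast
        then show ?thesis using False by simp
      qed
    qed
    also have "\<dots> = G x" by (simp add: emeasure_count_space_finite)
    finally show ?thesis .
  qed
  have meas: "(\<lambda>(k, x). G x * indicator Dh (x - ivec k)) \<in> borel_measurable (count_space UNIV \<Otimes>\<^sub>M lborel)"
  proof -
    have m1: "\<And>k. (\<lambda>x. G x * indicator Dh (x - ivec k)) \<in> borel_measurable lborel" by measurable
    show ?thesis by (rule measurable_pair_measure_countable1) (simp_all add: m1)
  qed
  have "(\<integral>\<^sup>+x. G x \<partial>lborel) = (\<integral>\<^sup>+x. (\<integral>\<^sup>+k. G x * indicator Dh (x - ivec k) \<partial>count_space UNIV) \<partial>lborel)"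
    by (simp add: pt)
  also have "\<dots> = (\<integral>\<^sup>+k. (\<integral>\<^sup>+x. G x * indicator Dh (x - ivec k) \<partial>lborel) \<partial>count_space UNIV)"
    using P.Fubini'[OF meas] by simp
  also have "\<dots> = (\<integral>\<^sup>+k. (\<integral>\<^sup>+x. G (x + ivec k) * indicator Dh x \<partial>lborel) \<partial>count_space UNIV)"
  proof (rule nn_integral_cong)
    fix k :: "int^'n"
    have "(\<integral>\<^sup>+x. G x * indicator Dh (x - ivec k) \<partial>lborel)
       = (\<integral>\<^sup>+v. G (ivec k + v) * indicator Dh (ivec k + v - ivec k) \<partial>lborel)"
      by (rule nn_integral_translate[symmetric]) measurable
    then show "(\<integral>\<^sup>+x. G x * indicator Dh (x - ivec k) \<partial>lborel) = (\<integral>\<^sup>+x. G (x + ivec k) * indicator Dh x \<partial>lborel)"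
      by (simp add: add.commute)
  qed
  finally show ?thesis .
qed

abbreviation Cb :: "(real^'n) set" where "Cb \<equiv> cbox 0 One"

lemma One_nth[simp]: "(One::real^'n) $ i = 1"
proof -
  have "axis i (1::real) \<in> (Basis :: (real^'n) set)" by (auto simp: Basis_vec_def)
  then have "(One::real^'n) \<bullet> axis i 1 = 1" by (rule inner_sum_Basis)
  then show ?thesis by (simp only: cart_eq_inner_axis)
qed

lemma One_nth'[simp]: "(\<Sum>x\<in>(Basis::(real^'n) set). x $ i) = 1"
  using One_nth[of i] by (simp only: sum_component)

lemma Dh_sub: "Dh \<subseteq> (Cb :: (real^'n) set)"
  by (auto simp: Dh_def mem_box_cart less_imp_le)

lemma box_sub_Dh: "box 0 One \<subseteq> (Dh :: (real^'n) set)"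
  by (auto simp: Dh_def mem_box_cart less_imp_le)

lemma AE_Dh_Cb: "AE x in lborel. indicator Dh x = (indicator Cb x :: 'b::zero_neq_one)"
proof -
  have "cbox 0 One - box 0 One \<in> null_sets (lborel :: (real^'n) measure)"
    using negligible_frontier_interval[of "0::real^'n" One]
    by (auto simp: null_sets_completion_iff negligible_iff_null_sets)
  moreover have "{x\<in>space lborel. indicator Dh x \<noteq> (indicator Cb x :: 'b)} \<subseteq> cbox 0 One - box 0 One"
      using Dh_sub box_sub_Dh by (auto simp: indicator_def)
  ultimately show ?thesis by (rule AE_I')
qed

lemma nn_Dh_Cb:
  fixes F :: "real^'n \<Rightarrow> ennreal"
  shows "(\<integral>\<^sup>+x. F x * indicator Dh x \<partial>lborel) = (\<integral>\<^sup>+x. F x * indicator Cb x \<partial>lborel)"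
  by (rule nn_integral_cong_AE) (use AE_Dh_Cb[where 'b=ennreal] in \<open>auto elim!: eventually_mono\<close>)

lemma Dh_unique': "\<exists>!k. x + ivec k \<in> Dh"
proof -
  from Dh_unique[of x] obtain k0 where k0: "x - ivec k0 \<in> Dh" and u: "\<forall>k. x - ivec k \<in> Dh \<longrightarrow> k = k0"
    unfolding Ex1_def by blast
  show ?thesis
  proof
    show "x + ivec (- k0) \<in> Dh" using k0 by (simp add: ivec_uminus)
  next
    fix k assume "x + ivec k \<in> Dh"
    then have "x - ivec (-k) \<in> Dh" by (simp add: ivec_uminus)
    then show "k = - k0" using u by force
  qed
qed

lemma tiling2:
  fixes G :: "real^'n \<Rightarrow> ennreal"
  assumes [measurable]: "G \<in> borel_measurable borel"
  shows "(\<integral>\<^sup>+x. G x \<partial>lborel) =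
    (\<integral>\<^sup>+k. (\<integral>\<^sup>+x. G (x - ivec k) * indicator Dh x \<partial>lborel) \<partial>count_space UNIV)"
proof -
  interpret P: pair_sigma_finite "count_space (UNIV :: (int^'n) set)" "lborel :: (real^'n) measure"
    unfolding pair_sigma_finite_def by (simp add: sigma_finite_measure_count_space sigma_finite_lborel)
  have pt: "(\<integral>\<^sup>+k. G x * indicator Dh (x + ivec k) \<partial>count_space UNIV) = G x" for x
  proof -
    from Dh_unique'[of x] obtain k0 where k0: "x + ivec k0 \<in> Dh" and u: "\<forall>k. x + ivec k \<in> Dh \<longrightarrow> k = k0"
      unfolding Ex1_def by blast
    have "(\<integral>\<^sup>+k. G x * indicator Dh (x + ivec k) \<partial>count_space UNIV)
        = (\<integral>\<^sup>+k. G x * indicator {k0} k \<partial>count_space UNIV)"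
    proof (rule nn_integral_cong)
      fix k show "G x * indicator Dh (x + ivec k) = G x * indicator {k0} k"
      proof (cases "k = k0")
        case True then show ?thesis using k0 by simp
      next
        case False then have "x + ivec k \<notin> Dh" using u by blast
        then show ?thesis using False by simp
      qed
    qed
    also have "\<dots> = G x" by (simp add: emeasure_count_space_finite)
    finally show ?thesis .
  qed
  have meas: "(\<lambda>(k, x). G x * indicator Dh (x + ivec k)) \<in> borel_measurable (count_space UNIV \<Otimes>\<^sub>M lborel)"
  proof -
    have m1: "\<And>k. (\<lambda>x. G x * indicator Dh (x + ivec k)) \<in> borel_measurable lborel" by measurable
    show ?thesis by (rule measurable_pair_measure_countable1) (simp_all add: m1)
  qed
  have "(\<integral>\<^sup>+x. G x \<partial>lborel) = (\<integral>\<^sup>+x. (\<integral>\<^sup>+k. G x * indicator Dh (x + ivec k) \<partial>count_space UNIV) \<partial>lborel)"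
    by (simp add: pt)
  also have "\<dots> = (\<integral>\<^sup>+k. (\<integral>\<^sup>+x. G x * indicator Dh (x + ivec k) \<partial>lborel) \<partial>count_space UNIV)"
    using P.Fubini'[OF meas] by simp
  also have "\<dots> = (\<integral>\<^sup>+k. (\<integral>\<^sup>+x. G (x - ivec k) * indicator Dh x \<partial>lborel) \<partial>count_space UNIV)"
  proof (rule nn_integral_cong)
    fix k :: "int^'n"
    have "(\<integral>\<^sup>+x. G x * indicator Dh (x + ivec k) \<partial>lborel)
       = (\<integral>\<^sup>+v. G (- ivec k + v) * indicator Dh (- ivec k + v + ivec k) \<partial>lborel)"
      by (rule nn_integral_translate[symmetric]) measurable
    then show "(\<integral>\<^sup>+x. G x * indicator Dh (x + ivec k) \<partial>lborel) = (\<integral>\<^sup>+x. G (x - ivec k) * indicator Dh x \<partial>lborel)"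
      by (simp add: add.commute)
  qed
  finally show ?thesis .
qed

lemma per_ivec: "lattice_periodic f \<Longrightarrow> f (x + ivec k) = f x"
  by (simp add: lattice_periodic_def ivec_def)

locale setting =
  fixes U :: "real^'n \<Rightarrow> real" and P :: "real^'n" and eps lam :: real and phi phib :: "real^'n \<Rightarrow> real"
  assumes U_cont: "continuous_on UNIV U" and U_per: "lattice_periodic U"
    and eps_pos: "eps > 0"
    and phi_per: "lattice_periodic phi" and phib_per: "lattice_periodic phib"
    and phi_cont: "continuous_on UNIV phi" and phib_cont: "continuous_on UNIV phib"
    and theta_norm: "torus_int (theta_of eps phi phib) = 1"
    and gamma_int: "\<forall>x. integrable lborel (gamma_of U P eps phi lam x)
                        \<and> (LINT v | lborel. gamma_of U P eps phi lam x v) = 1"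
    and Q_int: "\<forall>x. integrable lborel (Q_of (theta_of eps phi phib) (gamma_of U P eps phi lam) x)
                     \<and> (LINT v | lborel. Q_of (theta_of eps phi phib) (gamma_of U P eps phi lam) x v) = 1"
begin

abbreviation th where "th \<equiv> theta_of eps phi phib"
abbreviation ga where "ga \<equiv> gamma_of U P eps phi lam"

lemma th_pos: "th x > 0" by (simp add: theta_of_def)
lemma ga_pos: "ga x v > 0" by (simp add: gamma_of_def)

lemma th_per: "th (x + ivec k) = th x"
  using per_ivec[OF phi_per] per_ivec[OF phib_per] by (simp add: theta_of_def)

lemma th_per': "th (x - ivec k) = th x"
  using th_per[of "x - ivec k" k] by simp

lemma ga_per: "ga (x + ivec k) v = ga x v"
proof -
  have "phi (x + ivec k + v) = phi (x + v)"
    using per_ivec[OF phi_per, of "x + v" k] by (simp add: algebra_simps)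
  then show ?thesis
    using per_ivec[OF phi_per] per_ivec[OF U_per] by (simp add: gamma_of_def Lag_def)
qed

lemma ga_per': "ga (x - ivec k) v = ga x v"
  using ga_per[of "x - ivec k" k v] by simp

lemma th_cont: "continuous_on UNIV th"
  unfolding theta_of_def using phi_cont phib_cont eps_pos
  by (intro continuous_intros) auto

lemma ga_cont: "continuous_on UNIV (\<lambda>p. ga (fst p) (snd p))"
proof -
  have c1: "continuous_on UNIV (\<lambda>p::(real^'n)\<times>(real^'n). U (fst p))"
    by (rule continuous_on_compose2[OF U_cont]) (auto intro: continuous_intros)
  have c2: "continuous_on UNIV (\<lambda>p::(real^'n)\<times>(real^'n). phi (fst p))"
    by (rule continuous_on_compose2[OF phi_cont]) (auto intro: continuous_intros)
  have c3: "continuous_on UNIV (\<lambda>p::(real^'n)\<times>(real^'n). phi (fst p + snd p))"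
  proof -
    have "continuous_on UNIV (\<lambda>p::(real^'n)\<times>(real^'n). fst p + snd p)"
      by (intro continuous_on_add continuous_on_fst continuous_on_snd continuous_on_id)
    from continuous_on_compose2[OF phi_cont this] show ?thesis by simp
  qed
  show ?thesis
    unfolding gamma_of_def Lag_def using c1 c2 c3 eps_pos
    by (intro continuous_intros) auto
qed

lemma th_meas[measurable]: "th \<in> borel_measurable borel"
  by (rule borel_measurable_continuous_onI[OF th_cont])

lemma ga_meas[measurable]: "(\<lambda>p. ga (fst p) (snd p)) \<in> borel_measurable borel"
  by (rule borel_measurable_continuous_onI[OF ga_cont])

lemma ga_meas2: "(\<lambda>p. ga (fst p) (snd p)) \<in> borel_measurable (lborel \<Otimes>\<^sub>M lborel)"
  using ga_meas by (simp add: lborel_prod)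

lemma minorize: "\<exists>\<alpha>>0. \<alpha> \<le> 1/2 \<and> (\<forall>x\<in>Cb. \<forall>y\<in>Cb. \<alpha> * th y \<le> ga x (y - x))"
proof -
  let ?f = "\<lambda>p::(real^'n)\<times>(real^'n). ga (fst p) (snd p - fst p) / th (snd p)"
  have cf: "continuous_on (Cb \<times> Cb) ?f"
  proof -
    have "continuous_on UNIV (\<lambda>p::(real^'n)\<times>(real^'n). (fst p, snd p - fst p))"
      by (intro continuous_on_Pair continuous_on_diff continuous_on_fst continuous_on_snd continuous_on_id)
    from continuous_on_compose2[OF ga_cont this]
    have "continuous_on UNIV (\<lambda>p::(real^'n)\<times>(real^'n). ga (fst p) (snd p - fst p))" by simp
    moreover have "continuous_on UNIV (\<lambda>p::(real^'n)\<times>(real^'n). th (snd p))"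
      by (rule continuous_on_compose2[OF th_cont]) (auto intro: continuous_intros)
    ultimately have "continuous_on UNIV ?f"
      using th_pos by (intro continuous_on_divide) (auto simp: less_imp_neq[symmetric])
    then show ?thesis by (rule continuous_on_subset) simp
  qed
  have "compact (Cb \<times> Cb)" by (intro compact_Times compact_cbox)
  moreover have "Cb \<times> Cb \<noteq> {}" by (simp add: box_ne_empty(1) inner_Basis_mono)
  ultimately obtain p where p: "p \<in> Cb \<times> Cb" and pm: "\<forall>q\<in>Cb \<times> Cb. ?f p \<le> ?f q"
    using continuous_attains_inf[OF _ _ cf] by blast
  define \<alpha> where "\<alpha> = min (?f p) (1/2)"
  have "?f p > 0" using ga_pos th_pos by simp
  then have "\<alpha> > 0" "\<alpha> \<le> 1/2" unfolding \<alpha>_def by (simp, linarith)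
  moreover have "\<forall>x\<in>Cb. \<forall>y\<in>Cb. \<alpha> * th y \<le> ga x (y - x)"
  proof (intro ballI)
    fix x y :: "real^'n" assume "x \<in> Cb" "y \<in> Cb"
    then have "\<alpha> \<le> ga x (y - x) / th y" using pm[rule_format, of "(x,y)"] by (auto simp: \<alpha>_def)
    then show "\<alpha> * th y \<le> ga x (y - x)" using th_pos[of y] by (simp add: field_simps)
  qed
  ultimately show ?thesis by blast
qed

end

context setting begin

lemma ga_meas_comp[measurable (raw)]:
  assumes "f \<in> borel_measurable M" "g \<in> borel_measurable M"
  shows "(\<lambda>z. ga (f z) (g z)) \<in> borel_measurable M"
proof -
  have "(\<lambda>z. (f z, g z)) \<in> measurable M (borel \<Otimes>\<^sub>M borel)"
    using assms by (rule measurable_Pair)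
  then have "(\<lambda>z. (f z, g z)) \<in> measurable M borel" by (simp add: borel_prod)
  from measurable_compose[OF this ga_meas] show ?thesis by simp
qed

lemma th_meas_comp[measurable (raw)]:
  assumes "f \<in> borel_measurable M"
  shows "(\<lambda>z. th (f z)) \<in> borel_measurable M"
  using measurable_compose[OF assms th_meas] by simp

lemma Qeq: "(\<integral>\<^sup>+v. ennreal (th (y - v) * ga (y - v) v) \<partial>lborel) = ennreal (th y)"
proof -
  let ?Q = "Q_of th ga y"
  have e: "th (y - v) * ga (y - v) v = th y * ?Q v" for v
    using th_pos[of y] by (simp add: Q_of_def)
  have Qnn: "0 \<le> ?Q v" for v using th_pos[of y] th_pos[of "y - v"] ga_pos[of "y - v" v] by (simp add: Q_of_def)
  have "(\<integral>\<^sup>+v. ennreal (th (y - v) * ga (y - v) v) \<partial>lborel) = (\<integral>\<^sup>+v. ennreal (th y) * ennreal (?Q v) \<partial>lborel)"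
    using th_pos[of y] Qnn by (simp add: e ennreal_mult)
  also have "\<dots> = ennreal (th y) * (\<integral>\<^sup>+v. ennreal (?Q v) \<partial>lborel)"
    by (rule nn_integral_cmult) (simp add: Q_of_def, measurable)
  also have "(\<integral>\<^sup>+v. ennreal (?Q v) \<partial>lborel) = ennreal (LINT v|lborel. ?Q v)"
    using Q_int Qnn by (intro nn_integral_eq_integral) auto
  also have "(LINT v|lborel. ?Q v) = 1" using Q_int by auto
  finally show ?thesis by simp
qed

lemma Cb_borel[measurable]: "(Cb :: (real^'n) set) \<in> sets borel"
  by (simp add: borel_closed)

lemma meas_prod_lborel: "borel_measurable (lborel \<Otimes>\<^sub>M lborel) = (borel_measurable borel :: ((real^'n)\<times>(real^'n) \<Rightarrow> ennreal) set)"
  by (simp add: lborel_prod)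

lemma stationary:
  fixes w :: "real^'n \<Rightarrow> ennreal"
  assumes wm[measurable]: "w \<in> borel_measurable borel" and wper: "\<And>x k. w (x + ivec k) = w x"
  shows "(\<integral>\<^sup>+x. ennreal (th x) * (\<integral>\<^sup>+v. ennreal (ga x v) * w (x + v) \<partial>lborel) * indicator Cb x \<partial>lborel)
       = (\<integral>\<^sup>+x. ennreal (th x) * w x * indicator Cb x \<partial>lborel)"
proof -
  interpret P: pair_sigma_finite "count_space (UNIV :: (int^'n) set)" "lborel :: (real^'n) measure"
    unfolding pair_sigma_finite_def by (simp add: sigma_finite_measure_count_space sigma_finite_lborel)
  define A where "A y = (\<integral>\<^sup>+x. ennreal (th x) * indicator Cb x * ennreal (ga x (y - x)) \<partial>lborel)" for y
  have Am[measurable]: "A \<in> borel_measurable borel"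
  proof -
    have "(\<lambda>(y, x). ennreal (th x) * indicator Cb x * ennreal (ga x (y - x))) \<in> borel_measurable (lborel \<Otimes>\<^sub>M lborel)"
      by measurable
    then have "A \<in> borel_measurable lborel"
      unfolding A_def by (rule lborel.borel_measurable_nn_integral)
    then show ?thesis by simp
  qed
  have step_a: "(\<integral>\<^sup>+v. ennreal (ga x v) * w (x + v) \<partial>lborel) = (\<integral>\<^sup>+y. ennreal (ga x (y - x)) * w y \<partial>lborel)" for x
  proof -
    have "(\<integral>\<^sup>+v. ennreal (ga x (x + v - x)) * w (x + v) \<partial>lborel) = (\<integral>\<^sup>+y. ennreal (ga x (y - x)) * w y \<partial>lborel)"
      by (rule nn_integral_translate[where G="\<lambda>y. ennreal (ga x (y - x)) * w y"]) measurable
    then show ?thesis by simp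
  qed
  have "(\<integral>\<^sup>+x. ennreal (th x) * (\<integral>\<^sup>+v. ennreal (ga x v) * w (x + v) \<partial>lborel) * indicator Cb x \<partial>lborel)
      = (\<integral>\<^sup>+x. (\<integral>\<^sup>+y. ennreal (th x) * indicator Cb x * ennreal (ga x (y - x)) * w y \<partial>lborel) \<partial>lborel)"
  proof (rule nn_integral_cong)
    fix x :: "real^'n"
    have "(\<integral>\<^sup>+y. ennreal (th x) * indicator Cb x * (ennreal (ga x (y - x)) * w y) \<partial>lborel)
        = ennreal (th x) * indicator Cb x * (\<integral>\<^sup>+y. ennreal (ga x (y - x)) * w y \<partial>lborel)"
      by (rule nn_integral_cmult) measurable
    then show "ennreal (th x) * (\<integral>\<^sup>+v. ennreal (ga x v) * w (x + v) \<partial>lborel) * indicator Cb x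
      = (\<integral>\<^sup>+y. ennreal (th x) * indicator Cb x * ennreal (ga x (y - x)) * w y \<partial>lborel)"
      by (subst step_a) (simp add: ac_simps)
  qed
  also have "\<dots> = (\<integral>\<^sup>+y. (\<integral>\<^sup>+x. ennreal (th x) * indicator Cb x * ennreal (ga x (y - x)) * w y \<partial>lborel) \<partial>lborel)"
  proof (rule lborel_pair.Fubini'[symmetric])
    show "(\<lambda>(x,y). ennreal (th x) * indicator Cb x * ennreal (ga x (y - x)) * w y) \<in> borel_measurable (lborel \<Otimes>\<^sub>M lborel)"
      by measurable
  qed
  also have "\<dots> = (\<integral>\<^sup>+y. w y * A y \<partial>lborel)"
  proof (rule nn_integral_cong)
    fix y :: "real^'n"
    show "(\<integral>\<^sup>+x. ennreal (th x) * indicator Cb x * ennreal (ga x (y - x)) * w y \<partial>lborel) = w y * A y"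
      unfolding A_def by (subst nn_integral_multc) (measurable, simp add: mult.commute)
  qed
  also have "\<dots> = (\<integral>\<^sup>+k. (\<integral>\<^sup>+y. w (y + ivec k) * A (y + ivec k) * indicator Dh y \<partial>lborel) \<partial>count_space UNIV)"
    by (rule tiling[where G="\<lambda>y. w y * A y"]) measurable
  also have "\<dots> = (\<integral>\<^sup>+k. (\<integral>\<^sup>+y. w y * indicator Dh y * A (y + ivec k) \<partial>lborel) \<partial>count_space UNIV)"
    by (simp add: wper mult.commute mult.left_commute)
  also have "\<dots> = (\<integral>\<^sup>+y. (\<integral>\<^sup>+k. w y * indicator Dh y * A (y + ivec k) \<partial>count_space UNIV) \<partial>lborel)"
  proof (rule P.Fubini'[symmetric])
    have m1: "\<And>k. (\<lambda>y. w y * indicator Dh y * A (y + ivec k)) \<in> borel_measurable lborel" by measurable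
    show "(\<lambda>(k, y). w y * indicator Dh y * A (y + ivec k)) \<in> borel_measurable (count_space UNIV \<Otimes>\<^sub>M lborel)"
      by (rule measurable_pair_measure_countable1) (simp_all add: m1)
  qed
  also have "\<dots> = (\<integral>\<^sup>+y. w y * indicator Dh y * (\<integral>\<^sup>+k. A (y + ivec k) \<partial>count_space UNIV) \<partial>lborel)"
    by (simp add: nn_integral_cmult)
  also have "\<dots> = (\<integral>\<^sup>+y. w y * indicator Dh y * ennreal (th y) \<partial>lborel)"
  proof (rule nn_integral_cong)
    fix y :: "real^'n"
    define H where "H x = ennreal (th x) * ennreal (ga x (y - x))" for x
    have Hm[measurable]: "H \<in> borel_measurable borel" unfolding H_def by measurable
    have "A (y + ivec k) = (\<integral>\<^sup>+x. H (x - ivec k) * indicator Dh x \<partial>lborel)" for k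
    proof -
      have "A (y + ivec k) = (\<integral>\<^sup>+x. H (x - ivec k) * indicator Cb x \<partial>lborel)"
        unfolding A_def H_def
        by (intro nn_integral_cong) (simp add: th_per' ga_per' algebra_simps mult.commute mult.left_commute)
      then show ?thesis by (simp add: nn_Dh_Cb)
    qed
    then have "(\<integral>\<^sup>+k. A (y + ivec k) \<partial>count_space UNIV) = (\<integral>\<^sup>+x. H x \<partial>lborel)"
      by (simp add: tiling2[OF Hm])
    also have "\<dots> = (\<integral>\<^sup>+v. H (y - v) \<partial>lborel)"
      by (rule nn_integral_reflect[symmetric]) measurable
    also have "\<dots> = ennreal (th y)"
      unfolding H_def using Qeq[of y] by (simp add: ennreal_mult[symmetric] th_pos ga_pos less_imp_le)
    finally show "w y * indicator Dh y * (\<integral>\<^sup>+k. A (y + ivec k) \<partial>count_space UNIV) = w y * indicator Dh y * ennreal (th y)"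
      by simp
  qed
  also have "\<dots> = (\<integral>\<^sup>+x. ennreal (th x) * w x * indicator Cb x \<partial>lborel)"
    using nn_Dh_Cb[of "\<lambda>y. ennreal (th y) * w y"] by (simp add: mult.commute mult.left_commute)
  finally show ?thesis .
qed

end

lemma integral_translate:
  fixes F :: "real^'n \<Rightarrow> real"
  assumes Fm[measurable]: "F \<in> borel_measurable borel" and Fi: "integrable lborel F"
  shows "integrable lborel (\<lambda>v. F (c + v))" "(LINT v|lborel. F (c + v)) = (LINT x|lborel. F x)"
proof -
  have "integrable (distr lborel borel ((+) c)) F" using Fi by (simp add: lborel_distr_plus)
  then show "integrable lborel (\<lambda>v. F (c + v))" by (subst (asm) integrable_distr_eq) auto
  have "(LINT x|lborel. F x) = (LINT x|distr lborel borel ((+) c). F x)" by (simp add: lborel_distr_plus)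
  also have "\<dots> = (LINT v|lborel. F (c + v))" by (rule integral_distr) auto
  finally show "(LINT v|lborel. F (c + v)) = (LINT x|lborel. F x)" by simp
qed

lemma discr:
  fixes A B K :: real
  assumes A: "A \<ge> 0" and q: "\<And>t. 0 \<le> t^2 * A - 2 * t * K + B"
  shows "K^2 \<le> A * B"
proof (cases "A = 0")
  case True
  show ?thesis
  proof (rule ccontr)
    assume "\<not> ?thesis"
    then have "K \<noteq> 0" using True by simp
    have "0 \<le> ((B + 1) / (2 * K))^2 * A - 2 * ((B + 1) / (2 * K)) * K + B" by (rule q)
    also have "\<dots> = -1" using \<open>K \<noteq> 0\<close> True by (simp add: field_simps)
    finally show False by simp
  qed
next
  case False
  then have Ap: "A > 0" using A by simp
  have "0 \<le> (K / A)^2 * A - 2 * (K / A) * K + B" by (rule q)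
  also have "(K / A)^2 * A - 2 * (K / A) * K + B = B - K^2 / A"
    using Ap by (simp add: field_simps power2_eq_square)
  finally have "K^2 / A \<le> B" by simp
  then show ?thesis using Ap by (simp add: field_simps)
qed

lemma cs_weighted:
  fixes w a b :: "'a \<Rightarrow> real"
  assumes w: "\<And>x. 0 \<le> w x"
    and ia: "integrable M (\<lambda>x. w x * (a x)^2)" and ib: "integrable M (\<lambda>x. w x * (b x)^2)"
    and iab: "integrable M (\<lambda>x. w x * a x * b x)"
  shows "(\<integral>x. w x * a x * b x \<partial>M)^2 \<le> (\<integral>x. w x * (a x)^2 \<partial>M) * (\<integral>x. w x * (b x)^2 \<partial>M)"
proof (rule discr)
  show "0 \<le> (\<integral>x. w x * (a x)^2 \<partial>M)" using w by (intro integral_nonneg_AE) auto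
  fix t :: real
  have "0 \<le> (\<integral>x. w x * (t * a x - b x)^2 \<partial>M)" using w by (intro integral_nonneg_AE) auto
  also have "(\<integral>x. w x * (t * a x - b x)^2 \<partial>M)
     = (\<integral>x. t^2 * (w x * (a x)^2) - 2 * t * (w x * a x * b x) + w x * (b x)^2 \<partial>M)"
    by (rule Bochner_Integration.integral_cong) (auto simp: power2_eq_square algebra_simps)
  also have "\<dots> = t^2 * (\<integral>x. w x * (a x)^2 \<partial>M) - 2 * t * (\<integral>x. w x * a x * b x \<partial>M) + (\<integral>x. w x * (b x)^2 \<partial>M)"
    using ia ib iab by simp
  finally show "0 \<le> t^2 * (\<integral>x. w x * (a x)^2 \<partial>M) - 2 * t * (\<integral>x. w x * a x * b x \<partial>M) + (\<integral>x. w x * (b x)^2 \<partial>M)" .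
qed

context setting begin

definition alpha where
  "alpha = (SOME a. a > 0 \<and> a \<le> 1/2 \<and> (\<forall>x\<in>Cb. \<forall>y\<in>Cb. a * th y \<le> ga x (y - x)))"

lemma alpha_props: "alpha > 0 \<and> alpha \<le> 1/2 \<and> (\<forall>x\<in>Cb. \<forall>y\<in>Cb. alpha * th y \<le> ga x (y - x))"
  unfolding alpha_def using someI_ex[OF minorize] by simp

lemma alpha_pos: "alpha > 0" and alpha_le: "alpha \<le> 1/2"
  using alpha_props by auto

lemma alpha_minor: "x \<in> Cb \<Longrightarrow> y \<in> Cb \<Longrightarrow> alpha * th y \<le> ga x (y - x)"
  using alpha_props by auto

lemma th_ind_int: "integrable lborel (\<lambda>y. indicator Cb y * th y)"
  using borel_integrable_compact[OF compact_cbox continuous_on_subset[OF th_cont], of 0 One] by simp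

lemma th_ind_val: "(LINT y|lborel. indicator Cb y * th y) = 1"
  using theta_norm by (simp add: torus_int_def set_lebesgue_integral_def)

lemma th_ind_nn: "(\<integral>\<^sup>+y. ennreal (th y) * indicator Cb y \<partial>lborel) = 1"
proof -
  have "(\<integral>\<^sup>+y. ennreal (th y) * indicator Cb y \<partial>lborel) = (\<integral>\<^sup>+y. ennreal (indicator Cb y * th y) \<partial>lborel)"
    by (intro nn_integral_cong) (simp split: split_indicator)
  also have "\<dots> = ennreal (LINT y|lborel. indicator Cb y * th y)"
    using th_ind_int by (intro nn_integral_eq_integral AE_I2 mult_nonneg_nonneg) (auto simp: th_pos less_imp_le)
  finally show ?thesis by (simp add: th_ind_val)
qed

lemma L2int:
  fixes h :: "real^'n \<Rightarrow> real"
  assumes hm[measurable]: "h \<in> borel_measurable borel"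
    and Ifin: "(\<integral>\<^sup>+y. ennreal (th y * (h y)^2) * indicator Cb y \<partial>lborel) < \<infinity>"
  shows "integrable lborel (\<lambda>y. indicator Cb y * (th y * (h y)^2))"
proof (rule integrableI_nonneg)
  show "(\<lambda>y. indicator Cb y * (th y * (h y)^2)) \<in> borel_measurable lborel" by measurable
  show "AE x in lborel. 0 \<le> indicator Cb x * (th x * (h x)\<^sup>2)"
    by (intro AE_I2 mult_nonneg_nonneg) (auto simp: th_pos less_imp_le)
  have "(\<integral>\<^sup>+y. ennreal (indicator Cb y * (th y * (h y)^2)) \<partial>lborel) = (\<integral>\<^sup>+y. ennreal (th y * (h y)^2) * indicator Cb y \<partial>lborel)"
    by (intro nn_integral_cong) (simp split: split_indicator)
  then show "(\<integral>\<^sup>+y. ennreal (indicator Cb y * (th y * (h y)^2)) \<partial>lborel) < \<infinity>" using Ifin by simp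
qed

lemma abs_le_sq: "\<bar>a::real\<bar> \<le> 1 + a^2"
proof -
  have a: "\<bar>a\<bar> * \<bar>a\<bar> = a * a" by (simp add: abs_mult_self_eq)
  have "0 \<le> (\<bar>a\<bar> - 1) * (\<bar>a\<bar> - 1)" by simp
  then have "2 * \<bar>a\<bar> \<le> a * a + 1" using a by (simp add: algebra_simps)
  moreover have "0 \<le> a * a" by simp
  ultimately show ?thesis by (simp add: power2_eq_square)
qed

lemma L1int:
  fixes h :: "real^'n \<Rightarrow> real"
  assumes hm[measurable]: "h \<in> borel_measurable borel"
    and Ifin: "(\<integral>\<^sup>+y. ennreal (th y * (h y)^2) * indicator Cb y \<partial>lborel) < \<infinity>"
  shows "integrable lborel (\<lambda>y. indicator Cb y * (th y * h y))"
proof (rule Bochner_Integration.integrable_bound)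
  show "integrable lborel (\<lambda>y. indicator Cb y * th y + indicator Cb y * (th y * (h y)^2))"
    using th_ind_int L2int[OF hm Ifin] by simp
  show "(\<lambda>y. indicator Cb y * (th y * h y)) \<in> borel_measurable lborel" by measurable
  show "AE y in lborel. norm (indicator Cb y * (th y * h y)) \<le> norm (indicator Cb y * th y + indicator Cb y * (th y * (h y)^2))"
  proof (intro AE_I2)
    fix y :: "real^'n"
    have t: "th y > 0" by (rule th_pos)
    have "\<bar>h y\<bar> \<le> 1 + (h y)^2" by (rule abs_le_sq)
    then have "th y * \<bar>h y\<bar> \<le> th y * (1 + (h y)^2)" using t by (intro mult_left_mono) auto
    then show "norm (indicator Cb y * (th y * h y)) \<le> norm (indicator Cb y * th y + indicator Cb y * (th y * (h y)^2))"
      using t by (auto simp: indicator_def abs_mult algebra_simps)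
  qed
qed

end

context setting begin

lemma pointwise:
  fixes h :: "real^'n \<Rightarrow> real" and k :: real and x :: "real^'n"
  assumes hm[measurable]: "h \<in> borel_measurable borel"
    and Ifin: "(\<integral>\<^sup>+y. ennreal (th y * (h y)^2) * indicator Cb y \<partial>lborel) < \<infinity>"
    and x: "x \<in> Cb"
  shows "ennreal (((LINT v|lborel. ga x v * (h (x+v) + k)) - k - alpha * (LINT y|lborel. indicator Cb y * (th y * h y)))^2)
     \<le> ennreal (1 - alpha) * (\<integral>\<^sup>+v. ennreal ((ga x v - alpha * th (x+v) * indicator Cb (x+v)) * (h (x+v))^2) \<partial>lborel)"
    (is "ennreal ?L \<le> _ * ?T")
proof -
  define s where "s v = ga x v - alpha * th (x+v) * indicator Cb (x+v)" for v
  define W where "W v = alpha * (indicator Cb (x+v) * th (x+v))" for v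
  define g where "g v = h (x+v)" for v
  have gm[measurable]: "g \<in> borel_measurable borel" unfolding g_def by measurable
  have Wm[measurable]: "W \<in> borel_measurable borel" unfolding W_def by measurable
  have sm[measurable]: "s \<in> borel_measurable borel" unfolding s_def by measurable
  have s_nn: "0 \<le> s v" for v
  proof (cases "x + v \<in> Cb")
    case True
    then have "alpha * th (x+v) \<le> ga x (x + v - x)" using alpha_minor[OF x] by blast
    then show ?thesis by (simp add: s_def True)
  next
    case False then show ?thesis using ga_pos[of x v] by (simp add: s_def)
  qed
  have sW: "s v = ga x v - W v" for v by (simp add: s_def W_def)
  have T_eq: "?T = (\<integral>\<^sup>+v. ennreal (s v * (g v)^2) \<partial>lborel)" by (simp add: s_def g_def)
  have a1: "1 - alpha > 0" using alpha_le by simp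
  show ?thesis
  proof (cases "?T = \<infinity>")
    case True
    then show ?thesis using a1 by (simp add: ennreal_mult_top)
  next
    case False
    then have Tfin: "(\<integral>\<^sup>+v. ennreal (s v * (g v)^2) \<partial>lborel) < \<infinity>" using T_eq by (simp add: top.not_eq_extremum)
    have isg2: "integrable lborel (\<lambda>v. s v * (g v)^2)"
      using Tfin s_nn by (intro integrableI_nonneg AE_I2) auto
    have iG: "integrable lborel (ga x)" and vG: "(LINT v|lborel. ga x v) = 1" using gamma_int by auto
    have iW: "integrable lborel W"
      unfolding W_def by (intro integrable_mult_right integral_translate(1) th_ind_int) measurable
    have vW: "(LINT v|lborel. W v) = alpha"
      unfolding W_def using integral_translate(2)[OF _ th_ind_int, of x] th_ind_val by simp
    have i2: "integrable lborel (\<lambda>y. indicator Cb y * (th y * (h y)^2))" by (rule L2int[OF hm Ifin])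
    have i1: "integrable lborel (\<lambda>y. indicator Cb y * (th y * h y))" by (rule L1int[OF hm Ifin])
    have iWg2: "integrable lborel (\<lambda>v. W v * (g v)^2)"
    proof -
      have "integrable lborel (\<lambda>v. alpha * (indicator Cb (x+v) * (th (x+v) * (h (x+v))^2)))"
        by (intro integrable_mult_right integral_translate(1) i2) measurable
      then show ?thesis by (simp add: W_def g_def mult.assoc)
    qed
    have iWg: "integrable lborel (\<lambda>v. W v * g v)"
    proof -
      have "integrable lborel (\<lambda>v. alpha * (indicator Cb (x+v) * (th (x+v) * h (x+v))))"
        by (intro integrable_mult_right integral_translate(1) i1) measurable
      then show ?thesis by (simp add: W_def g_def mult.assoc)
    qed
    have vWg: "(LINT v|lborel. W v * g v) = alpha * (LINT y|lborel. indicator Cb y * (th y * h y))"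
    proof -
      have "(LINT v|lborel. W v * g v) = (LINT v|lborel. alpha * (indicator Cb (x+v) * (th (x+v) * h (x+v))))"
        by (simp add: W_def g_def mult.assoc)
      also have "\<dots> = alpha * (LINT v|lborel. indicator Cb (x+v) * (th (x+v) * h (x+v)))" by simp
      also have "(LINT v|lborel. indicator Cb (x+v) * (th (x+v) * h (x+v))) = (LINT y|lborel. indicator Cb y * (th y * h y))"
        by (rule integral_translate(2)[OF _ i1]) measurable
      finally show ?thesis .
    qed
    have iGg2: "integrable lborel (\<lambda>v. ga x v * (g v)^2)"
    proof -
      have "integrable lborel (\<lambda>v. s v * (g v)^2 + W v * (g v)^2)" using isg2 iWg2 by simp
      then show ?thesis by (simp add: sW algebra_simps)
    qed
    have iGg: "integrable lborel (\<lambda>v. ga x v * g v)"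
    proof (rule Bochner_Integration.integrable_bound)
      show "integrable lborel (\<lambda>v. ga x v + ga x v * (g v)^2)" using iG iGg2 by simp
      show "(\<lambda>v. ga x v * g v) \<in> borel_measurable lborel" by measurable
      show "AE v in lborel. norm (ga x v * g v) \<le> norm (ga x v + ga x v * (g v)^2)"
      proof (intro AE_I2)
        fix v
        have p: "ga x v > 0" by (rule ga_pos)
        have "ga x v * \<bar>g v\<bar> \<le> ga x v * (1 + (g v)^2)" using p abs_le_sq[of "g v"] by (intro mult_left_mono) auto
        then show "norm (ga x v * g v) \<le> norm (ga x v + ga x v * (g v)^2)"
          using p by (simp add: abs_mult algebra_simps)
      qed
    qed
    have iss: "integrable lborel s" unfolding sW[abs_def] using iG iW by simp
    have isg: "integrable lborel (\<lambda>v. s v * g v)"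
    proof -
      have "integrable lborel (\<lambda>v. ga x v * g v - W v * g v)" using iGg iWg by simp
      then show ?thesis by (simp add: sW algebra_simps)
    qed
    have vs: "(LINT v|lborel. s v) = 1 - alpha" unfolding sW[abs_def] using iG iW vG vW by simp
    have vF: "(LINT v|lborel. ga x v * (h (x+v) + k)) = (LINT v|lborel. ga x v * g v) + k"
    proof -
      have "(LINT v|lborel. ga x v * (h (x+v) + k)) = (LINT v|lborel. ga x v * g v + k * ga x v)"
        by (simp add: g_def algebra_simps)
      also have "\<dots> = (LINT v|lborel. ga x v * g v) + k * (LINT v|lborel. ga x v)" using iGg iG by simp
      finally show ?thesis using vG by simp
    qed
    have vJ: "(LINT v|lborel. s v * g v) = (LINT v|lborel. ga x v * g v) - (LINT v|lborel. W v * g v)"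
    proof -
      have "(LINT v|lborel. s v * g v) = (LINT v|lborel. ga x v * g v - W v * g v)" by (simp add: sW algebra_simps)
      then show ?thesis using iGg iWg by simp
    qed
    have Leq: "?L = (LINT v|lborel. s v * g v)^2" using vF vJ vWg by simp
    have cs: "(LINT v|lborel. s v * g v * 1)^2 \<le> (LINT v|lborel. s v * (g v)^2) * (LINT v|lborel. s v * 1^2)"
      using s_nn isg2 iss isg by (intro cs_weighted) auto
    then have cs': "?L \<le> (LINT v|lborel. s v * (g v)^2) * (1 - alpha)" using Leq vs by simp
    have Tv: "?T = ennreal (LINT v|lborel. s v * (g v)^2)"
      unfolding T_eq using isg2 s_nn by (intro nn_integral_eq_integral AE_I2) auto
    have B0: "0 \<le> (LINT v|lborel. s v * (g v)^2)" using s_nn by (intro integral_nonneg_AE AE_I2) auto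
    have "ennreal ?L \<le> ennreal ((LINT v|lborel. s v * (g v)^2) * (1 - alpha))"
      using cs' by (rule ennreal_leI)
    also have "\<dots> = ennreal (1 - alpha) * ?T"
      using B0 a1 Tv by (simp add: ennreal_mult mult.commute)
    finally show ?thesis .
  qed
qed

end

context setting begin

lemma s_nonneg: "x \<in> Cb \<Longrightarrow> 0 \<le> ga x v - alpha * th (x+v) * indicator Cb (x+v)"
proof (cases "x + v \<in> Cb")
  case True
  assume x: "x \<in> Cb"
  then have "alpha * th (x+v) \<le> ga x (x + v - x)" using alpha_minor[OF x True] by blast
  then show ?thesis by (simp add: True)
next
  case False then show ?thesis using ga_pos[of x v] by simp
qed

lemma one_step:
  fixes h :: "real^'n \<Rightarrow> real" and k :: real
  assumes hm[measurable]: "h \<in> borel_measurable borel" and hper: "\<And>y j. h (y + ivec j) = h y"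
    and Ifin: "(\<integral>\<^sup>+y. ennreal (th y * (h y)^2) * indicator Cb y \<partial>lborel) < \<infinity>"
  shows "(\<integral>\<^sup>+x. ennreal (th x * ((LINT v|lborel. ga x v * (h (x+v) + k)) - k - alpha * (LINT y|lborel. indicator Cb y * (th y * h y)))^2) * indicator Cb x \<partial>lborel)
     \<le> ennreal ((1-alpha)^2) * (\<integral>\<^sup>+y. ennreal (th y * (h y)^2) * indicator Cb y \<partial>lborel)"
proof -
  define I where "I = (\<integral>\<^sup>+y. ennreal (th y * (h y)^2) * indicator Cb y \<partial>lborel)"
  define T where "T x = (\<integral>\<^sup>+v. ennreal ((ga x v - alpha * th (x+v) * indicator Cb (x+v)) * (h (x+v))^2) \<partial>lborel)" for x
  define c where "c = (LINT y|lborel. indicator Cb y * (th y * h y))"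
  have a1: "1 - alpha > 0" using alpha_le by simp
  have Tm[measurable]: "T \<in> borel_measurable borel"
  proof -
    have "(\<lambda>(x, v). ennreal ((ga x v - alpha * th (x+v) * indicator Cb (x+v)) * (h (x+v))^2)) \<in> borel_measurable (lborel \<Otimes>\<^sub>M lborel)"
      by measurable
    then have "T \<in> borel_measurable lborel" unfolding T_def by (rule lborel.borel_measurable_nn_integral)
    then show ?thesis by simp
  qed
  have i_eq: "(\<integral>\<^sup>+v. ennreal (ga x v) * ennreal ((h (x+v))^2) \<partial>lborel) = T x + ennreal alpha * I" if x: "x \<in> Cb" for x
  proof -
    have "(\<integral>\<^sup>+v. ennreal (ga x v) * ennreal ((h (x+v))^2) \<partial>lborel)
      = (\<integral>\<^sup>+v. ennreal ((ga x v - alpha * th (x+v) * indicator Cb (x+v)) * (h (x+v))^2)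
              + ennreal alpha * ennreal (indicator Cb (x+v) * (th (x+v) * (h (x+v))^2)) \<partial>lborel)"
    proof (rule nn_integral_cong)
      fix v
      have n1: "0 \<le> (ga x v - alpha * th (x+v) * indicator Cb (x+v)) * (h (x+v))^2"
        using s_nonneg[OF x, of v] by simp
      have n2: "0 \<le> alpha * (indicator Cb (x+v) * (th (x+v) * (h (x+v))^2))"
        using alpha_pos th_pos[of "x+v"] by (intro mult_nonneg_nonneg) auto
      have n3: "0 \<le> indicator Cb (x+v) * (th (x+v) * (h (x+v))^2)"
        using th_pos[of "x+v"] by (intro mult_nonneg_nonneg) auto
      have "ennreal (ga x v) * ennreal ((h (x+v))^2) = ennreal (ga x v * (h (x+v))^2)"
        using ga_pos[of x v] by (simp add: ennreal_mult)
      also have "ga x v * (h (x+v))^2 = (ga x v - alpha * th (x+v) * indicator Cb (x+v)) * (h (x+v))^2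
          + alpha * (indicator Cb (x+v) * (th (x+v) * (h (x+v))^2))" by (simp add: algebra_simps)
      also have "ennreal \<dots> = ennreal ((ga x v - alpha * th (x+v) * indicator Cb (x+v)) * (h (x+v))^2)
          + ennreal alpha * ennreal (indicator Cb (x+v) * (th (x+v) * (h (x+v))^2))"
        using n1 n2 alpha_pos n3 by (simp add: ennreal_plus ennreal_mult)
      finally show "ennreal (ga x v) * ennreal ((h (x+v))^2) = \<dots>" .
    qed
    also have "\<dots> = T x + (\<integral>\<^sup>+v. ennreal alpha * ennreal (indicator Cb (x+v) * (th (x+v) * (h (x+v))^2)) \<partial>lborel)"
      unfolding T_def by (rule nn_integral_add) measurable
    also have "(\<integral>\<^sup>+v. ennreal alpha * ennreal (indicator Cb (x+v) * (th (x+v) * (h (x+v))^2)) \<partial>lborel)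
        = ennreal alpha * (\<integral>\<^sup>+v. ennreal (indicator Cb (x+v) * (th (x+v) * (h (x+v))^2)) \<partial>lborel)"
      by (rule nn_integral_cmult) measurable
    also have "(\<integral>\<^sup>+v. ennreal (indicator Cb (x+v) * (th (x+v) * (h (x+v))^2)) \<partial>lborel)
        = (\<integral>\<^sup>+y. ennreal (indicator Cb y * (th y * (h y)^2)) \<partial>lborel)"
      by (rule nn_integral_translate[where G="\<lambda>y. ennreal (indicator Cb y * (th y * (h y)^2))"]) measurable
    also have "\<dots> = I" unfolding I_def by (intro nn_integral_cong) (simp split: split_indicator)
    finally show ?thesis .
  qed
  have stat: "(\<integral>\<^sup>+x. ennreal (th x) * (\<integral>\<^sup>+v. ennreal (ga x v) * ennreal ((h (x+v))^2) \<partial>lborel) * indicator Cb x \<partial>lborel) = I"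
  proof -
    have "(\<integral>\<^sup>+x. ennreal (th x) * (\<integral>\<^sup>+v. ennreal (ga x v) * ennreal ((h (x+v))^2) \<partial>lborel) * indicator Cb x \<partial>lborel)
        = (\<integral>\<^sup>+x. ennreal (th x) * ennreal ((h x)^2) * indicator Cb x \<partial>lborel)"
      by (rule stationary[where w="\<lambda>y. ennreal ((h y)^2)"]) (measurable, simp add: hper)
    also have "\<dots> = I" unfolding I_def using th_pos
      by (intro nn_integral_cong) (simp add: ennreal_mult less_imp_le)
    finally show ?thesis .
  qed
  define X where "X = (\<integral>\<^sup>+x. ennreal (th x) * T x * indicator Cb x \<partial>lborel)"
  have IX: "I = X + ennreal alpha * I"
  proof -
    have "I = (\<integral>\<^sup>+x. ennreal (th x) * (\<integral>\<^sup>+v. ennreal (ga x v) * ennreal ((h (x+v))^2) \<partial>lborel) * indicator Cb x \<partial>lborel)"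
      using stat by simp
    also have "\<dots> = (\<integral>\<^sup>+x. ennreal (th x) * T x * indicator Cb x + (ennreal alpha * I) * (ennreal (th x) * indicator Cb x) \<partial>lborel)"
    proof (rule nn_integral_cong)
      fix x :: "real^'n"
      show "ennreal (th x) * (\<integral>\<^sup>+v. ennreal (ga x v) * ennreal ((h (x+v))^2) \<partial>lborel) * indicator Cb x
         = ennreal (th x) * T x * indicator Cb x + (ennreal alpha * I) * (ennreal (th x) * indicator Cb x)"
      proof (cases "x \<in> Cb")
        case True then show ?thesis by (simp add: i_eq distrib_left mult_ac)
      next
        case False then show ?thesis by simp
      qed
    qed
    also have "\<dots> = X + (\<integral>\<^sup>+x. (ennreal alpha * I) * (ennreal (th x) * indicator Cb x) \<partial>lborel)"
      unfolding X_def by (rule nn_integral_add) measurable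
    also have "(\<integral>\<^sup>+x. (ennreal alpha * I) * (ennreal (th x) * indicator Cb x) \<partial>lborel) = ennreal alpha * I"
      by (subst nn_integral_cmult) (measurable, simp add: th_ind_nn)
    finally show ?thesis .
  qed
  obtain r where r: "I = ennreal r" "0 \<le> r" using Ifin unfolding I_def[symmetric]
    by (cases I) auto
  have "X \<le> I" using IX by (metis le_iff_add)
  then obtain xx where xx: "X = ennreal xx" "0 \<le> xx" using r
    by (cases X) (auto simp: top_unique)
  have sp: "ennreal (xx + alpha * r) = ennreal xx + ennreal (alpha * r)"
    using xx r alpha_pos by (intro ennreal_plus) auto
  have "ennreal r = ennreal (xx + alpha * r)"
    using IX r xx alpha_pos unfolding sp by (simp add: ennreal_mult)
  moreover have nn: "0 \<le> xx + alpha * r" using r xx alpha_pos by simp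
  ultimately have "r = xx + alpha * r" using ennreal_inj[OF r(2) nn] by blast
  then have Xv: "X = ennreal ((1 - alpha) * r)" using xx by (simp add: algebra_simps)
  have "(\<integral>\<^sup>+x. ennreal (th x * ((LINT v|lborel. ga x v * (h (x+v) + k)) - k - alpha * c)^2) * indicator Cb x \<partial>lborel)
     \<le> (\<integral>\<^sup>+x. ennreal (1 - alpha) * (ennreal (th x) * T x * indicator Cb x) \<partial>lborel)"
  proof (rule nn_integral_mono)
    fix x :: "real^'n"
    show "ennreal (th x * ((LINT v|lborel. ga x v * (h (x+v) + k)) - k - alpha * c)^2) * indicator Cb x
       \<le> ennreal (1 - alpha) * (ennreal (th x) * T x * indicator Cb x)"
    proof (cases "x \<in> Cb")
      case True
      have p: "ennreal (((LINT v|lborel. ga x v * (h (x+v) + k)) - k - alpha * c)^2) \<le> ennreal (1 - alpha) * T x"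
        unfolding c_def T_def by (rule pointwise[OF hm Ifin True])
      have "ennreal (th x * ((LINT v|lborel. ga x v * (h (x+v) + k)) - k - alpha * c)^2)
          = ennreal (th x) * ennreal (((LINT v|lborel. ga x v * (h (x+v) + k)) - k - alpha * c)^2)"
        using th_pos[of x] by (simp add: ennreal_mult)
      also have "\<dots> \<le> ennreal (th x) * (ennreal (1 - alpha) * T x)"
        by (rule mult_left_mono[OF p]) simp
      finally show ?thesis using True by (simp add: mult_ac)
    next
      case False then show ?thesis by simp
    qed
  qed
  also have "\<dots> = ennreal (1 - alpha) * X" unfolding X_def
    by (rule nn_integral_cmult) measurable
  also have "\<dots> = ennreal ((1-alpha)^2) * I"
    using Xv r a1 by (simp add: ennreal_mult[symmetric] power2_eq_square mult.assoc)
  finally show ?thesis unfolding I_def c_def .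
qed

end

context setting begin

lemma Fop_Suc_meas:
  assumes [measurable]: "F \<in> borel_measurable borel"
  shows "(\<lambda>x. LINT v|lborel. ga x v * F (x + v)) \<in> borel_measurable borel"
proof -
  have "(\<lambda>(x, v). ga x v * F (x + v)) \<in> borel_measurable (lborel \<Otimes>\<^sub>M lborel)" by measurable
  then have "(\<lambda>x. LINT v|lborel. ga x v * F (x + v)) \<in> borel_measurable lborel"
    by (rule lborel.borel_measurable_lebesgue_integral)
  then show ?thesis by simp
qed

lemma iterate:
  fixes f :: "real^'n \<Rightarrow> real"
  assumes fm: "f \<in> borel_measurable borel" and fper: "\<And>y j. f (y + ivec j) = f y"
    and Ifin: "(\<integral>\<^sup>+y. ennreal (th y * (f y)^2) * indicator Cb y \<partial>lborel) < \<infinity>"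
  shows "Fop ga m f \<in> borel_measurable borel \<and> (\<forall>y j. Fop ga m f (y + ivec j) = Fop ga m f y) \<and>
    (\<exists>k. (\<integral>\<^sup>+y. ennreal (th y * (Fop ga m f y - k)^2) * indicator Cb y \<partial>lborel)
       \<le> ennreal ((1-alpha)^(2*m)) * (\<integral>\<^sup>+y. ennreal (th y * (f y)^2) * indicator Cb y \<partial>lborel))"
proof (induction m)
  case 0
  then show ?case using fm fper by (auto intro!: exI[of _ 0])
next
  case (Suc m)
  let ?F = "Fop ga m f"
  from Suc.IH have Fm[measurable]: "?F \<in> borel_measurable borel" and Fper: "\<And>y j. ?F (y + ivec j) = ?F y"
    and "\<exists>k. (\<integral>\<^sup>+y. ennreal (th y * (?F y - k)^2) * indicator Cb y \<partial>lborel)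
       \<le> ennreal ((1-alpha)^(2*m)) * (\<integral>\<^sup>+y. ennreal (th y * (f y)^2) * indicator Cb y \<partial>lborel)" by auto
  then obtain k where k: "(\<integral>\<^sup>+y. ennreal (th y * (?F y - k)^2) * indicator Cb y \<partial>lborel)
       \<le> ennreal ((1-alpha)^(2*m)) * (\<integral>\<^sup>+y. ennreal (th y * (f y)^2) * indicator Cb y \<partial>lborel)" by blast
  define h where "h y = ?F y - k" for y
  have hm[measurable]: "h \<in> borel_measurable borel" unfolding h_def by measurable
  have hper: "\<And>y j. h (y + ivec j) = h y" unfolding h_def using Fper by simp
  have k': "(\<integral>\<^sup>+y. ennreal (th y * (h y)^2) * indicator Cb y \<partial>lborel)
       \<le> ennreal ((1-alpha)^(2*m)) * (\<integral>\<^sup>+y. ennreal (th y * (f y)^2) * indicator Cb y \<partial>lborel)"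
    using k by (simp add: h_def)
  have "ennreal ((1-alpha)^(2*m)) * (\<integral>\<^sup>+y. ennreal (th y * (f y)^2) * indicator Cb y \<partial>lborel) < \<infinity>"
    using Ifin by (simp add: ennreal_mult_less_top)
  then have Ih: "(\<integral>\<^sup>+y. ennreal (th y * (h y)^2) * indicator Cb y \<partial>lborel) < \<infinity>"
    by (rule le_less_trans[OF k'])
  have FS: "Fop ga (Suc m) f = (\<lambda>x. LINT v|lborel. ga x v * (h (x + v) + k))"
    by (simp add: h_def)
  define c where "c = (LINT y|lborel. indicator Cb y * (th y * h y))"
  have step: "(\<integral>\<^sup>+x. ennreal (th x * ((LINT v|lborel. ga x v * (h (x+v) + k)) - k - alpha * c)^2) * indicator Cb x \<partial>lborel)
     \<le> ennreal ((1-alpha)^2) * (\<integral>\<^sup>+y. ennreal (th y * (h y)^2) * indicator Cb y \<partial>lborel)"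
    unfolding c_def by (rule one_step[OF hm hper Ih])
  also have "\<dots> \<le> ennreal ((1-alpha)^2) * (ennreal ((1-alpha)^(2*m)) * (\<integral>\<^sup>+y. ennreal (th y * (f y)^2) * indicator Cb y \<partial>lborel))"
    using k' by (intro mult_left_mono) auto
  also have "\<dots> = ennreal ((1-alpha)^(2 * Suc m)) * (\<integral>\<^sup>+y. ennreal (th y * (f y)^2) * indicator Cb y \<partial>lborel)"
  proof -
    have a0: "0 \<le> 1 - alpha" using alpha_le by simp
    have eq: "(1-alpha)^(2 * Suc m) = (1-alpha)^2 * (1-alpha)^(2*m)" by (simp add: mult_Suc_right power_add power2_eq_square)
    have e1: "ennreal ((1-alpha)^2 * (1-alpha)^(2*m)) = ennreal ((1-alpha)^2) * ennreal ((1-alpha)^(2*m))"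
      by (rule ennreal_mult) (use a0 in auto)
    show ?thesis by (simp only: eq e1 mult.assoc)
  qed
  finally have fin: "(\<integral>\<^sup>+x. ennreal (th x * (Fop ga (Suc m) f x - (k + alpha * c))^2) * indicator Cb x \<partial>lborel)
     \<le> ennreal ((1-alpha)^(2 * Suc m)) * (\<integral>\<^sup>+y. ennreal (th y * (f y)^2) * indicator Cb y \<partial>lborel)"
    unfolding FS by (simp add: algebra_simps)
  have m2: "Fop ga (Suc m) f \<in> borel_measurable borel"
    using Fop_Suc_meas[OF Fm] by simp
  have p2: "\<forall>y j. Fop ga (Suc m) f (y + ivec j) = Fop ga (Suc m) f y"
  proof (intro allI)
    fix y j
    have "\<And>v. ga (y + ivec j) v * ?F (y + ivec j + v) = ga y v * ?F (y + v)"
      using ga_per Fper[of "y + v" j for v] by (simp add: algebra_simps)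
    then show "Fop ga (Suc m) f (y + ivec j) = Fop ga (Suc m) f y" by simp
  qed
  show ?case using m2 p2 fin by blast
qed

end

context setting begin

lemma inL2_facts:
  assumes "in_L2 th f"
  shows "f \<in> borel_measurable borel" "\<And>y j. f (y + ivec j) = f y"
    "(\<integral>\<^sup>+y. ennreal (th y * (f y)^2) * indicator Cb y \<partial>lborel) < \<infinity>"
proof -
  show "f \<in> borel_measurable borel" using assms by (simp add: in_L2_def)
  show "\<And>y j. f (y + ivec j) = f y" using assms by (simp add: in_L2_def per_ivec)
  have "integrable lborel (\<lambda>x. indicator Cb x *\<^sub>R ((f x)^2 * th x))"
    using assms by (simp add: in_L2_def set_integrable_def)
  then have "(\<integral>\<^sup>+x. ennreal (norm (indicator Cb x *\<^sub>R ((f x)^2 * th x))) \<partial>lborel) < \<infinity>"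
    by (simp add: integrable_iff_bounded)
  moreover have "(\<integral>\<^sup>+x. ennreal (norm (indicator Cb x *\<^sub>R ((f x)^2 * th x))) \<partial>lborel)
      = (\<integral>\<^sup>+y. ennreal (th y * (f y)^2) * indicator Cb y \<partial>lborel)"
    using th_pos by (intro nn_integral_cong) (auto simp: abs_mult less_imp_le mult.commute split: split_indicator)
  ultimately show "(\<integral>\<^sup>+y. ennreal (th y * (f y)^2) * indicator Cb y \<partial>lborel) < \<infinity>" by simp
qed

lemma I_eq:
  fixes h :: "real^'n \<Rightarrow> real"
  assumes hm[measurable]: "h \<in> borel_measurable borel"
    and Ifin: "(\<integral>\<^sup>+y. ennreal (th y * (h y)^2) * indicator Cb y \<partial>lborel) < \<infinity>"
  shows "(\<integral>\<^sup>+y. ennreal (th y * (h y)^2) * indicator Cb y \<partial>lborel) = ennreal (LINT y|lborel. indicator Cb y * (th y * (h y)^2))"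
proof -
  have "(\<integral>\<^sup>+y. ennreal (th y * (h y)^2) * indicator Cb y \<partial>lborel) = (\<integral>\<^sup>+y. ennreal (indicator Cb y * (th y * (h y)^2)) \<partial>lborel)"
    by (intro nn_integral_cong) (simp split: split_indicator)
  also have "\<dots> = ennreal (LINT y|lborel. indicator Cb y * (th y * (h y)^2))"
    using L2int[OF hm Ifin] th_pos by (intro nn_integral_eq_integral AE_I2 mult_nonneg_nonneg) (auto intro: less_imp_le)
  finally show ?thesis .
qed

lemma corr_bound:
  assumes f: "in_L2 th f" and g: "in_L2 th g" and g0: "torus_int (\<lambda>x. g x * th x) = 0"
  shows "\<exists>C. \<forall>m. \<bar>markov_corr th ga g f m\<bar> \<le> C * (1 - alpha) ^ m"
proof -
  note fm[measurable] = inL2_facts(1)[OF f] and fper = inL2_facts(2)[OF f] and fI = inL2_facts(3)[OF f]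
  note gm[measurable] = inL2_facts(1)[OF g] and gI = inL2_facts(3)[OF g]
  define Hf where "Hf = (LINT y|lborel. indicator Cb y * (th y * (f y)^2))"
  define Gg where "Gg = (LINT y|lborel. indicator Cb y * (th y * (g y)^2))"
  have Gg0: "0 \<le> Gg" unfolding Gg_def using th_pos
    by (intro integral_nonneg_AE AE_I2 mult_nonneg_nonneg) (auto intro: less_imp_le)
  have Hf0: "0 \<le> Hf" unfolding Hf_def using th_pos
    by (intro integral_nonneg_AE AE_I2 mult_nonneg_nonneg) (auto intro: less_imp_le)
  have a0: "0 \<le> 1 - alpha" using alpha_le by simp
  have "\<bar>markov_corr th ga g f m\<bar> \<le> sqrt (Gg * Hf) * (1 - alpha) ^ m" for m
  proof -
    from iterate[OF fm fper fI, of m] obtain k where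
      Fm[measurable]: "Fop ga m f \<in> borel_measurable borel" and
      k: "(\<integral>\<^sup>+y. ennreal (th y * (Fop ga m f y - k)^2) * indicator Cb y \<partial>lborel)
       \<le> ennreal ((1-alpha)^(2*m)) * (\<integral>\<^sup>+y. ennreal (th y * (f y)^2) * indicator Cb y \<partial>lborel)" by blast
    define h where "h y = Fop ga m f y - k" for y
    have hm[measurable]: "h \<in> borel_measurable borel" unfolding h_def by measurable
    have k': "(\<integral>\<^sup>+y. ennreal (th y * (h y)^2) * indicator Cb y \<partial>lborel)
       \<le> ennreal ((1-alpha)^(2*m)) * (\<integral>\<^sup>+y. ennreal (th y * (f y)^2) * indicator Cb y \<partial>lborel)"
      using k by (simp add: h_def)
    have "ennreal ((1-alpha)^(2*m)) * (\<integral>\<^sup>+y. ennreal (th y * (f y)^2) * indicator Cb y \<partial>lborel) < \<infinity>"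
      using fI by (simp add: ennreal_mult_less_top)
    then have hI: "(\<integral>\<^sup>+y. ennreal (th y * (h y)^2) * indicator Cb y \<partial>lborel) < \<infinity>"
      by (rule le_less_trans[OF k'])
    define Hh where "Hh = (LINT y|lborel. indicator Cb y * (th y * (h y)^2))"
    have "ennreal Hh \<le> ennreal ((1-alpha)^(2*m)) * ennreal Hf"
      using k' unfolding Hh_def Hf_def I_eq[OF hm hI, symmetric] I_eq[OF fm fI, symmetric] .
    also have "\<dots> = ennreal ((1-alpha)^(2*m) * Hf)" using a0 Hf0 by (simp add: ennreal_mult)
    finally have Hhle: "Hh \<le> (1-alpha)^(2*m) * Hf"
      using a0 Hf0 by (subst (asm) ennreal_le_iff) auto
    have ig2: "integrable lborel (\<lambda>y. indicator Cb y * th y * (g y)^2)"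
      using L2int[OF gm gI] by (simp add: mult.assoc)
    have ih2: "integrable lborel (\<lambda>y. indicator Cb y * th y * (h y)^2)"
      using L2int[OF hm hI] by (simp add: mult.assoc)
    have ig1: "integrable lborel (\<lambda>y. indicator Cb y * (th y * g y))" by (rule L1int[OF gm gI])
    have igh: "integrable lborel (\<lambda>y. indicator Cb y * th y * g y * h y)"
    proof (rule Bochner_Integration.integrable_bound)
      show "integrable lborel (\<lambda>y. indicator Cb y * th y * (g y)^2 + indicator Cb y * th y * (h y)^2)"
        using ig2 ih2 by simp
      show "(\<lambda>y. indicator Cb y * th y * g y * h y) \<in> borel_measurable lborel" by measurable
      show "AE y in lborel. norm (indicator Cb y * th y * g y * h y) \<le> norm (indicator Cb y * th y * (g y)^2 + indicator Cb y * th y * (h y)^2)"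
      proof (intro AE_I2)
        fix y
        have t: "0 \<le> indicator Cb y * th y" using th_pos[of y] by (simp add: less_imp_le)
        have "\<bar>g y * h y\<bar> \<le> (g y)^2 + (h y)^2"
        proof -
          have "0 \<le> (\<bar>g y\<bar> - \<bar>h y\<bar>)^2" by simp
          then have "2 * (\<bar>g y\<bar> * \<bar>h y\<bar>) \<le> (g y)^2 + (h y)^2" by (simp add: power2_eq_square algebra_simps)
          moreover have "0 \<le> \<bar>g y\<bar> * \<bar>h y\<bar>" by simp
          ultimately have "\<bar>g y\<bar> * \<bar>h y\<bar> \<le> (g y)^2 + (h y)^2" by linarith
          then show ?thesis by (simp add: abs_mult)
        qed
        then have "indicator Cb y * th y * \<bar>g y * h y\<bar> \<le> indicator Cb y * th y * ((g y)^2 + (h y)^2)"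
          using t by (rule mult_left_mono)
        moreover have "norm (indicator Cb y * th y * g y * h y) = indicator Cb y * th y * \<bar>g y * h y\<bar>"
          using th_pos[of y] by (simp add: abs_mult mult.assoc)
        moreover have "norm (indicator Cb y * th y * (g y)^2 + indicator Cb y * th y * (h y)^2) = indicator Cb y * th y * ((g y)^2 + (h y)^2)"
        proof -
          have "0 \<le> indicator Cb y * th y * ((g y)^2 + (h y)^2)" using t by simp
          then show ?thesis by (simp only: real_norm_def abs_of_nonneg distrib_left)
        qed
        ultimately show "norm (indicator Cb y * th y * g y * h y) \<le> norm (indicator Cb y * th y * (g y)^2 + indicator Cb y * th y * (h y)^2)"
          by simp
      qed
    qed
    have vg: "(LINT y|lborel. indicator Cb y * (th y * g y)) = 0"
      using g0 by (simp add: torus_int_def set_lebesgue_integral_def mult_ac)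
    have "markov_corr th ga g f m = (LINT y|lborel. indicator Cb y * th y * g y * h y + k * (indicator Cb y * (th y * g y)))"
      unfolding markov_corr_def torus_int_def set_lebesgue_integral_def
      by (intro Bochner_Integration.integral_cong) (simp_all add: h_def algebra_simps)
    also have "\<dots> = (LINT y|lborel. indicator Cb y * th y * g y * h y)"
      using igh ig1 vg by simp
    finally have corr: "markov_corr th ga g f m = (LINT y|lborel. indicator Cb y * th y * g y * h y)" .
    have cs: "(LINT y|lborel. indicator Cb y * th y * g y * h y)^2
        \<le> (LINT y|lborel. indicator Cb y * th y * (g y)^2) * (LINT y|lborel. indicator Cb y * th y * (h y)^2)"
      using ig2 ih2 igh by (intro cs_weighted) (auto intro!: mult_nonneg_nonneg simp: th_pos less_imp_le)
    have "(LINT y|lborel. indicator Cb y * th y * (g y)^2) = Gg" unfolding Gg_def by (simp add: mult.assoc)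
    moreover have "(LINT y|lborel. indicator Cb y * th y * (h y)^2) = Hh" unfolding Hh_def by (simp add: mult.assoc)
    ultimately have "(markov_corr th ga g f m)^2 \<le> Gg * Hh" using cs corr by simp
    also have "\<dots> \<le> Gg * ((1-alpha)^(2*m) * Hf)" using Hhle Gg0 by (rule mult_left_mono)
    also have "\<dots> = (sqrt (Gg * Hf) * (1 - alpha) ^ m)^2"
      using Gg0 Hf0 by (simp add: power_mult_distrib power_mult[symmetric] mult_ac mult.commute[of 2 m])
    finally have "(markov_corr th ga g f m)^2 \<le> (sqrt (Gg * Hf) * (1 - alpha) ^ m)^2" .
    then have "\<bar>markov_corr th ga g f m\<bar>^2 \<le> (sqrt (Gg * Hf) * (1 - alpha) ^ m)^2" by simp
    moreover have "0 \<le> sqrt (Gg * Hf) * (1 - alpha) ^ m" using a0 Gg0 Hf0 by simp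
    ultimately show ?thesis by (rule power2_le_imp_le)
  qed
  then show ?thesis by blast
qed

end

theorem mainTheorem5:
  fixes U :: "real^'n \<Rightarrow> real" and P :: "real^'n" and eps lam :: real
    and phi phib :: "real^'n \<Rightarrow> real"
  assumes U_smooth: "smooth_fun U" and U_per: "lattice_periodic U"
    and eps_pos: "eps > 0"
    and phi_per: "lattice_periodic phi" and phib_per: "lattice_periodic phib"
    and phi_diff: "\<forall>x. phi differentiable (at x)"
    and phib_diff: "\<forall>x. phib differentiable (at x)"
    and eq1_int: "\<forall>x. integrable lborel (\<lambda>v. exp (- (Lag U P x v + phi (x + v)) / eps))"
    and eq1: "\<forall>x. - eps * ln (LINT v | lborel. exp (- (Lag U P x v + phi (x + v)) / eps)) = phi x + lam"
    and eq2_int: "\<forall>x. integrable lborel (\<lambda>v. exp (- (Lag U P (x + v) (- v) + phib (x + v)) / eps))"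
    and eq2: "\<forall>x. - eps * ln (LINT v | lborel. exp (- (Lag U P (x + v) (- v) + phib (x + v)) / eps)) = phib x + lam"
    and theta_norm: "torus_int (theta_of eps phi phib) = 1"
    and gamma_int: "\<forall>x. integrable lborel (gamma_of U P eps phi lam x)
                        \<and> (LINT v | lborel. gamma_of U P eps phi lam x v) = 1"
    and Q_int: "\<forall>x. integrable lborel (Q_of (theta_of eps phi phib) (gamma_of U P eps phi lam) x)
                     \<and> (LINT v | lborel. Q_of (theta_of eps phi phib) (gamma_of U P eps phi lam) x v) = 1"
    and holonomic: "\<forall>\<psi>. continuous_on UNIV \<psi> \<and> lattice_periodic \<psi> \<longrightarrow>
        torus_int (\<lambda>x. LINT v | lborel. (\<psi> (x + v) - \<psi> x) * theta_of eps phi phib x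
                                          * gamma_of U P eps phi lam x v) = 0"
    and fixed_unique: "\<forall>g1 g2. pos_fixed (gamma_of U P eps phi lam) g1 \<and> pos_fixed (gamma_of U P eps phi lam) g2
        \<longrightarrow> (\<exists>c>0. \<forall>x. g1 x = c * g2 x)"
  shows "\<exists>\<rho>::real. 0 < \<rho> \<and> \<rho> < 1 \<and>
    (\<forall>f g. in_L2 (theta_of eps phi phib) f \<and> in_L2 (theta_of eps phi phib) g
        \<and> torus_int (\<lambda>x. f x * theta_of eps phi phib x) = 0
        \<and> torus_int (\<lambda>x. g x * theta_of eps phi phib x) = 0
      \<longrightarrow> (\<exists>C. \<forall>m. \<bar>markov_corr (theta_of eps phi phib) (gamma_of U P eps phi lam) g f m\<bar> \<le> C * \<rho> ^ m))"
proof -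
  have Uc: "continuous_on UNIV U" using U_smooth by (cases rule: smooth_fun.cases) auto
  have pc: "continuous_on UNIV phi"
    using phi_diff by (intro continuous_at_imp_continuous_on) (auto dest: differentiable_imp_continuous_within)
  have pbc: "continuous_on UNIV phib"
    using phib_diff by (intro continuous_at_imp_continuous_on) (auto dest: differentiable_imp_continuous_within)
  interpret S: setting U P eps lam phi phib
    by unfold_locales (use Uc pc pbc U_per eps_pos phi_per phib_per theta_norm gamma_int Q_int in auto)
  have a: "0 < 1 - S.alpha" "1 - S.alpha < 1" using S.alpha_le S.alpha_pos by simp_all
  show ?thesis
    apply (rule exI[of _ "1 - S.alpha"])
    using a S.corr_bound by blast
qed

end
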